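(* Let $f(z)=z+\sum_{n=2}^{\infty}a_nz^n$ belong to $\mathcal{S}^*_{ch}$, and let $\gamma_1,\gamma_2,\gamma_3$ be its first three logarithmic coefficients, i.e. $$\gamma_1=\tfrac12 a_2,\qquad \gamma_2=\tfrac12\Big(a_3-\tfrac12 a_2^2\Big),\qquad \gamma_3=\tfrac12\Big(a_4-a_2a_3+\tfrac13 a_2^3\Big).$$ Then $|\gamma_n|\le \frac{1}{2n}$ for $n=1,2,3$. These inequalities are sharp: for each $n\in\{1,2,3\}$, equality $|\gamma_n|=\frac1{2n}$ holds for the function $$f_n(z)=z\exp\left(\int_0^z\frac{t^n+\cosh(t^n)-1}{t}\,dt\right),\quad z\in\mathbb{D},$$ which belongs to $\mathcal{S}^*_{ch}$.
   Context: $\mathbb{D}=\{z\in\mathbb{C}:|z|<1\}$. $\mathcal{A}$ is the class of analytic functions $f$ on $\mathbb{D}$ with $f(0)=0$, $f'(0)=1$, i.e. $f(z)=z+\sum_{n\ge2}a_nz^n$. For analytic $g,h$ on $\mathbb{D}$, $g\prec h$ (subordination) means there is an analytic $\omega$ on $\mathbb{D}$ with $\omega(0)=0$, $|\omega(z)|<1$, and $g=h\circ\omega$. The class $\mathcal{S}^*_{ch}$ consists of all $f\in\mathcal{A}$ with $\frac{zf'(z)}{f(z)}\prec \varphi_0(z):=z+\cosh z$ on $\mathbb{D}$. The logarithmic coefficients $\gamma_n$ of $f$ are defined by $\log\frac{f(z)}{z}=2\sum_{n\ge1}\gamma_nz^n$ (with $\log 1=0$); the formulas for $\gamma_1,\gamma_2,\gamma_3$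 in terms of $a_2,a_3,a_4$ follow from this definition. *)

theory Defs
  imports "HOL-Complex_Analysis.Complex_Analysis"
begin

abbreviation unit_disk :: "complex set" where
  "unit_disk \<equiv> ball 0 1"

definition subordinate :: "(complex \<Rightarrow> complex) \<Rightarrow> (complex \<Rightarrow> complex) \<Rightarrow> bool" where
  "subordinate g h \<longleftrightarrow>
     (\<exists>\<omega>. \<omega> holomorphic_on unit_disk \<and> \<omega> 0 = 0 \<and>
          (\<forall>z\<in>unit_disk. norm (\<omega> z) < 1) \<and>
          (\<forall>z\<in>unit_disk. g z = h (\<omega> z)))"

definition phi0 :: "complex \<Rightarrow> complex" where
  "phi0 z = z + cosh z"

definition classA :: "(complex \<Rightarrow> complex) \<Rightarrow> bool" where
  "classA f \<longleftrightarrow> f holomorphic_on unit_disk \<and> f 0 = 0 \<and> deriv f 0 = 1"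

text \<open>The class S*_ch: z f'(z)/f(z) (an analytic function on the disk, i.e. f has no
  zeros in the punctured disk and the quotient extends analytically to 0) is subordinate to phi0.\<close>
definition Sstar_ch :: "(complex \<Rightarrow> complex) \<Rightarrow> bool" where
  "Sstar_ch f \<longleftrightarrow> classA f \<and>
     (\<exists>p. p holomorphic_on unit_disk \<and>
          (\<forall>z\<in>unit_disk - {0}. f z \<noteq> 0 \<and> p z = z * deriv f z / f z) \<and>
          subordinate p phi0)"

definition taylor_coeff :: "(complex \<Rightarrow> complex) \<Rightarrow> nat \<Rightarrow> complex" where
  "taylor_coeff f n = (deriv ^^ n) f 0 / of_nat (fact n)"

definition log_coeff :: "(complex \<Rightarrow> complex) \<Rightarrow> nat \<Rightarrow> complex" where
  "log_coeff f n =
     (let a2 = taylor_coeff f 2; a3 = taylor_coeff f 3; a4 = taylor_coeff f 4 in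
      if n = 1 then a2 / 2
      else if n = 2 then (a3 - a2^2 / 2) / 2
      else if n = 3 then (a4 - a2 * a3 + a2^3 / 3) / 2
      else 0)"

definition extremal :: "nat \<Rightarrow> complex \<Rightarrow> complex" where
  "extremal n z = z * exp (contour_integral (linepath 0 z) (\<lambda>t. (t^n + cosh (t^n) - 1) / t))"

end

theory Submission
  imports Defs
begin



lemma fps_unique:
  fixes f :: "complex \<Rightarrow> complex"
  assumes "f has_fps_expansion F" "f has_fps_expansion G" shows "F = G"
  using assms by (simp add: fps_eq_iff fps_nth_fps_expansion)

lemma fps_eq_ev:
  fixes f g :: "complex \<Rightarrow> complex"
  assumes "f has_fps_expansion F" "g has_fps_expansion G" "eventually (\<lambda>z. f z = g z) (nhds 0)"
  shows "F = G"
proof -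
  have "g has_fps_expansion F" using has_fps_expansion_cong[OF assms(3) refl] assms(1) by simp
  thus ?thesis using assms(2) fps_unique by blast
qed

lemma disk_ev: "eventually (\<lambda>z::complex. z \<in> unit_disk) (nhds 0)"
  by (intro eventually_nhds_in_open) auto

lemma hol_fps: "f holomorphic_on unit_disk \<Longrightarrow> f has_fps_expansion fps_expansion f 0"
  by (rule has_fps_expansion_fps_expansion) auto

lemma taylor_fps: "taylor_coeff f n = fps_expansion f 0 $ n"
  by (simp add: taylor_coeff_def fps_expansion_def)

definition Phi :: "complex fps" where
  "Phi = fps_X + fps_const (1/2) * (fps_exp 1 + fps_exp (-1))"

lemma phi0_fps: "phi0 has_fps_expansion Phi"
proof -
  have "(\<lambda>z. z + (1/2) * (exp z + exp (-z))) has_fps_expansion Phi"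
    unfolding Phi_def by (intro fps_expansion_intros)
  moreover have "(\<lambda>z. z + (1/2) * (exp z + exp (-z))) = phi0"
    by (auto simp: phi0_def cosh_def scaleR_conv_of_real field_simps)
  ultimately show ?thesis by simp
qed

lemma Phi_nth: "Phi $ 0 = 1" "Phi $ 1 = 1" "Phi $ 2 = 1/2" "Phi $ 3 = 0"
  by (simp_all add: Phi_def fps_exp_def numeral_3_eq_3 fact_numeral)

lemma pow_nth:
  fixes W :: "complex fps" assumes "W $ 0 = 0"
  shows "(W^2) $ 1 = 0" "(W^2) $ 2 = (W$1)^2" "(W^2) $ 3 = 2 * W$1 * W$2"
        "(W^3) $ 1 = 0" "(W^3) $ 2 = 0" "(W^3) $ 3 = (W$1)^3"
  using assms by (simp_all add: power2_eq_square power3_eq_cube fps_mult_nth numeral_3_eq_3 numeral_2_eq_2)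

lemma compose_nth:
  fixes W :: "complex fps" assumes "W $ 0 = 0"
  shows "(Phi oo W) $ 1 = W $ 1" "(Phi oo W) $ 2 = W $ 2 + (W $ 1)^2 / 2"
        "(Phi oo W) $ 3 = W $ 3 + W $ 1 * W $ 2"
  using assms pow_nth[OF assms] Phi_nth
  by (simp_all add: fps_compose_nth numeral_3_eq_3 numeral_2_eq_2)


lemma core:
  assumes hf: "f holomorphic_on unit_disk" and f0: "f 0 = 0" and df0: "deriv f 0 = 1"
  and eq: "\<forall>z\<in>unit_disk - {0}. f z \<noteq> 0 \<and> p z = z * deriv f z / f z"
  and hp: "p has_fps_expansion P"
  shows "log_coeff f 1 = fps_nth P 1 / 2" "log_coeff f 2 = fps_nth P 2 / 4"
        "log_coeff f 3 = fps_nth P 3 / 6"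
proof -
  define F where "F = fps_expansion f 0"
  have hF: "f has_fps_expansion F" unfolding F_def by (rule hol_fps[OF hf])
  have h1: "(\<lambda>z. z * deriv f z) has_fps_expansion fps_X * fps_deriv F"
    by (intro fps_expansion_intros hF)
  have h2: "(\<lambda>z. p z * f z) has_fps_expansion P * F"
    by (intro fps_expansion_intros hF hp)
  have ev: "eventually (\<lambda>z. z * deriv f z = p z * f z) (nhds 0)"
    using disk_ev
  proof eventually_elim
    case (elim z)
    show ?case
    proof (cases "z = 0")
      case True thus ?thesis using f0 by simp
    next
      case False thus ?thesis using eq elim by auto
    qed
  qed
  have E: "fps_X * fps_deriv F = P * F" by (rule fps_eq_ev[OF h1 h2 ev])
  have F0: "fps_nth F 0 = 0" and F1: "fps_nth F 1 = 1"
    using f0 df0 by (simp_all add: F_def fps_expansion_def)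
  have e: "fps_nth (fps_X * fps_deriv F) n = fps_nth (P * F) n" for n using E by simp
  note e1 = e[of 1] and e2 = e[of 2] and e3 = e[of 3] and e4 = e[of 4]
  have "fps_nth P 0 = 1" using e1 F0 F1 by (simp add: fps_mult_nth)
  then show "log_coeff f 1 = fps_nth P 1 / 2" "log_coeff f 2 = fps_nth P 2 / 4"
        "log_coeff f 3 = fps_nth P 3 / 6"
    using e2 e3 e4 F0 F1
    by (simp_all add: log_coeff_def taylor_fps F_def[symmetric] fps_mult_nth
        numeral_3_eq_3 numeral_2_eq_2 eval_nat_numeral field_simps) 
qed



lemma lim_t:
  fixes A B C :: real
  assumes "\<And>t. 0 < t \<Longrightarrow> t < 1 \<Longrightarrow> t * A \<le> C - t^2 * B"
  shows "A \<le> C - B"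
proof -
  have l1: "((\<lambda>t. t * A) \<longlongrightarrow> 1 * A) (at_left (1::real))" by (intro tendsto_intros)
  have l2: "((\<lambda>t. C - t^2 * B) \<longlongrightarrow> C - 1^2 * B) (at_left (1::real))" by (intro tendsto_intros)
  have ev: "eventually (\<lambda>t. t \<in> {0<..<1}) (at_left (1::real))"
    by (rule eventually_at_left_real) simp
  have "eventually (\<lambda>t. t * A \<le> C - t^2 * B) (at_left (1::real))"
    using ev by eventually_elim (use assms in auto)
  from tendsto_le[OF trivial_limit_at_left_real l2 l1 this] show ?thesis by simp
qed

lemma schwarz_le:
  assumes hol: "g holomorphic_on unit_disk" and g0: "g 0 = 0"
    and bd: "\<And>z. z \<in> unit_disk \<Longrightarrow> norm (g z) \<le> 1"
  obtains \<psi> where "\<psi> holomorphic_on unit_disk" "\<And>z. z \<in> unit_disk \<Longrightarrow> g z = z * \<psi> z"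
    "\<And>z. z \<in> unit_disk \<Longrightarrow> norm (\<psi> z) \<le> 1" "deriv g 0 = \<psi> 0"
proof -
  obtain h where holh: "h holomorphic_on unit_disk" and geq: "\<And>z. norm z < 1 \<Longrightarrow> g z = z * h z"
    and dg: "deriv g 0 = h 0"
    using Schwarz3[OF hol g0] by blast
  have key: "norm (g z) \<le> norm z \<and> norm (deriv g 0) \<le> 1" if z: "norm z < 1" for z
  proof -
    have "t * norm (g z) \<le> norm z - t^2 * 0 \<and> t * norm (deriv g 0) \<le> 1 - t^2 * 0"
      if t: "0 < t" "t < 1" for t
    proof -
      define gt where "gt = (\<lambda>w. complex_of_real t * g w)"
      have holt: "gt holomorphic_on unit_disk" unfolding gt_def by (intro holomorphic_intros hol)
      have gt0: "gt 0 = 0" by (simp add: gt_def g0)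
      have nt: "norm (gt w) < 1" if "norm w < 1" for w
      proof -
        have "norm (gt w) = t * norm (g w)" using t by (simp add: gt_def norm_mult)
        also have "\<dots> \<le> t * 1" using bd[of w] that t by (intro mult_left_mono) auto
        finally show ?thesis using t by simp
      qed
      have s1: "norm (gt z) \<le> norm z" and s2: "norm (deriv gt 0) \<le> 1"
        using Schwarz_Lemma[OF holt gt0 nt z] by auto
      have "g field_differentiable at 0"
        using hol by (intro holomorphic_on_imp_differentiable_at[of _ unit_disk]) auto
      hence "deriv gt 0 = t * deriv g 0" unfolding gt_def by (simp add: deriv_cmult)
      thus ?thesis using s1 s2 t by (simp add: gt_def norm_mult)
    qed
    hence h1: "\<And>t. 0 < t \<Longrightarrow> t < 1 \<Longrightarrow> t * norm (g z) \<le> norm z - t^2 * 0"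
      and h2: "\<And>t. 0 < t \<Longrightarrow> t < 1 \<Longrightarrow> t * norm (deriv g 0) \<le> 1 - t^2 * 0" by blast+
    show ?thesis using lim_t[OF h1] lim_t[OF h2] by simp
  qed
  show ?thesis
  proof (rule that[OF holh])
    show "g z = z * h z" if "z \<in> unit_disk" for z using geq that by simp
    show "deriv g 0 = h 0" by (rule dg)
    show "norm (h z) \<le> 1" if "z \<in> unit_disk" for z
    proof (cases "z = 0")
      case True thus ?thesis using key[of 0] dg by simp
    next
      case False
      have "norm z * norm (h z) \<le> norm z * 1" using key[of z] geq[of z] that by (simp add: norm_mult)
      thus ?thesis using False by simp
    qed
  qed
qed

lemma mobius_le:
  fixes a b :: complex
  assumes "norm a \<le> 1" "norm b \<le> 1"
  shows "norm (a - b) \<le> norm (1 - cnj b * a)"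
proof -
  obtain x y where a: "a = Complex x y" by (cases a)
  obtain u v where b: "b = Complex u v" by (cases b)
  have ha: "x^2 + y^2 \<le> 1" using assms(1) a by (simp add: cmod_def)
  have hb: "u^2 + v^2 \<le> 1" using assms(2) b by (simp add: cmod_def)
  have p: "0 \<le> (1 - (x^2+y^2)) * (1 - (u^2+v^2))" using ha hb by simp
  have "norm (1 - cnj b * a)^2 - norm (a - b)^2 = (1 - (x^2+y^2)) * (1 - (u^2+v^2))"
    unfolding a b cmod_power2 by (simp add: power2_eq_square algebra_simps)
  hence "norm (a - b)^2 \<le> norm (1 - cnj b * a)^2" using p by linarith
  thus ?thesis by (rule power2_le_imp_le) simp
qed




lemma coef1:
  assumes hol: "g holomorphic_on unit_disk" and bd: "\<And>z. z \<in> unit_disk \<Longrightarrow> norm (g z) \<le> 1"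
  shows "norm (deriv g 0) \<le> 1 - norm (g 0)^2"
proof -
  define a0 where "a0 = g 0"
  define a1 where "a1 = deriv g 0"
  have a0le: "norm a0 \<le> 1" using bd[of 0] by (simp add: a0_def)
  have "t * norm a1 \<le> 1 - t^2 * norm a0 ^ 2" if t: "0 < t" "t < 1" for t
  proof -
    define c where "c = complex_of_real (t^2) * cnj a0"
    define D where "D = (\<lambda>z. 1 - c * g z)"
    define h where "h = (\<lambda>z. (complex_of_real t * g z - complex_of_real t * a0) / D z)"
    have Dnz: "D z \<noteq> 0" if "z \<in> unit_disk" for z
    proof -
      have "norm (c * g z) \<le> t^2 * 1 * 1" unfolding c_def norm_mult using bd[OF that] a0le t
        by (intro mult_mono) (auto simp: norm_power)
      also have "\<dots> < 1" using t by (simp add: power_less_one_iff)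
      finally show ?thesis unfolding D_def by auto
    qed
    have holD: "D holomorphic_on unit_disk" unfolding D_def by (intro holomorphic_intros hol)
    have holh: "h holomorphic_on unit_disk" unfolding h_def
      by (intro holomorphic_intros hol holD Dnz)
    have h0: "h 0 = 0" by (simp add: h_def a0_def)
    have hb: "norm (h z) \<le> 1" if z: "z \<in> unit_disk" for z
    proof -
      have "norm (complex_of_real t * g z - complex_of_real t * a0)
            \<le> norm (1 - cnj (complex_of_real t * a0) * (complex_of_real t * g z))"
        using bd[OF z] a0le t by (intro mobius_le) (auto simp: norm_mult intro: mult_le_one)
      also have "cnj (complex_of_real t * a0) * (complex_of_real t * g z) = c * g z"
        by (simp add: c_def power2_eq_square)
      finally have "norm (complex_of_real t * g z - complex_of_real t * a0) \<le> norm (D z)"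
        by (simp add: D_def)
      thus ?thesis using Dnz[OF z] by (simp add: h_def norm_divide divide_le_eq_1)
    qed
    obtain \<psi> where "\<And>z. z \<in> unit_disk \<Longrightarrow> norm (\<psi> z) \<le> 1" "deriv h 0 = \<psi> 0"
      using schwarz_le[OF holh h0 hb] by metis
    hence dh: "norm (deriv h 0) \<le> 1" by simp
    define G where "G = fps_expansion g 0"
    define H where "H = fps_expansion h 0"
    have hG: "g has_fps_expansion G" unfolding G_def by (rule hol_fps[OF hol])
    have hH: "h has_fps_expansion H" unfolding H_def by (rule hol_fps[OF holh])
    have e1: "(\<lambda>z. h z * (1 - c * g z)) has_fps_expansion H * (1 - fps_const c * G)"
      by (intro fps_expansion_intros hG hH)
    have e2: "(\<lambda>z. complex_of_real t * g z - complex_of_real t * a0) has_fps_expansion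
               fps_const (complex_of_real t) * G - fps_const (complex_of_real t * a0)"
      by (intro fps_expansion_intros hG)
    have ev: "eventually (\<lambda>z. h z * (1 - c * g z) = complex_of_real t * g z - complex_of_real t * a0) (nhds 0)"
      using disk_ev by eventually_elim (use Dnz in \<open>auto simp: h_def D_def\<close>)
    have E: "H * (1 - fps_const c * G) = fps_const (complex_of_real t) * G - fps_const (complex_of_real t * a0)"
      by (rule fps_eq_ev[OF e1 e2 ev])
    have "fps_nth (H * (1 - fps_const c * G)) 1 = fps_nth (fps_const (complex_of_real t) * G - fps_const (complex_of_real t * a0)) 1"
      using E by simp
    moreover have "fps_nth H 0 = 0" "fps_nth H 1 = deriv h 0" "fps_nth G 0 = a0" "fps_nth G 1 = a1"
      using h0 by (simp_all add: H_def G_def fps_expansion_def a0_def a1_def)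
    ultimately have "deriv h 0 * (1 - c * a0) = complex_of_real t * a1"
      by (simp add: fps_mult_nth)
    moreover have "c * a0 = complex_of_real (t^2 * norm a0 ^ 2)"
      using complex_norm_square[of a0] by (simp add: c_def)
    ultimately have eq: "deriv h 0 * complex_of_real (1 - t^2 * norm a0 ^ 2) = complex_of_real t * a1"
      by simp
    have pos: "0 \<le> 1 - t^2 * norm a0 ^ 2"
    proof -
      have "t^2 * norm a0 ^ 2 \<le> 1 * 1" using t a0le
        by (intro mult_mono) (auto simp: power_le_one)
      thus ?thesis by simp
    qed
    have "t * norm a1 = norm (deriv h 0) * (1 - t^2 * norm a0 ^ 2)"
      using arg_cong[OF eq, of norm] t pos
      unfolding norm_mult norm_of_real abs_of_nonneg[OF pos] by simp
    also have "\<dots> \<le> 1 * (1 - t^2 * norm a0 ^ 2)" using dh pos by (intro mult_right_mono)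
    finally show ?thesis by simp
  qed
  hence "norm a1 \<le> 1 - norm a0 ^ 2" by (rule lim_t) auto
  thus ?thesis by (simp add: a0_def a1_def)
qed




lemma real_ineq:
  fixes x u :: real
  assumes "0 \<le> x" "x \<le> 1" "0 \<le> u" "u \<le> 1"
  shows "(1 - x^2) * (1 - u^2 + x * u^2 + x * u) \<le> 1"
proof -
  define v where "v = u * (1 - x)"
  have v1: "v \<le> 1" unfolding v_def using assms by (intro mult_le_one) auto
  have v0: "0 \<le> v" unfolding v_def using assms by simp
  have id: "1 - (1 - x^2) * (1 - u^2 + x * u^2 + x * u) = (1 - v) * (x - v/2)^2 + v^2 * (3 + v) / 4"
    unfolding v_def by (simp add: algebra_simps power2_eq_square power3_eq_cube field_simps)
  have "0 \<le> (1 - v) * (x - v/2)^2 + v^2 * (3 + v) / 4" using v0 v1 by simp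
  thus ?thesis using id by linarith
qed

lemma schwarz_coeffs:
  assumes hol: "\<omega> holomorphic_on unit_disk" and w0: "\<omega> 0 = 0"
    and bd: "\<And>z. z \<in> unit_disk \<Longrightarrow> norm (\<omega> z) < 1"
    and hW: "\<omega> has_fps_expansion W"
  shows "norm (fps_nth W 1) \<le> 1" "norm (fps_nth W 2 + (fps_nth W 1)^2 / 2) \<le> 1"
        "norm (fps_nth W 3 + fps_nth W 1 * fps_nth W 2) \<le> 1"
proof -
  obtain \<omega>1 where hol1: "\<omega>1 holomorphic_on unit_disk" and weq: "\<And>z. z \<in> unit_disk \<Longrightarrow> \<omega> z = z * \<omega>1 z"
    and bd1: "\<And>z. z \<in> unit_disk \<Longrightarrow> norm (\<omega>1 z) \<le> 1" and dw: "deriv \<omega> 0 = \<omega>1 0"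
    using schwarz_le[OF hol w0] bd by (metis less_imp_le)
  define W1 where "W1 = fps_expansion \<omega>1 0"
  have hW1: "\<omega>1 has_fps_expansion W1" unfolding W1_def by (rule hol_fps[OF hol1])
  have "(\<lambda>z. z * \<omega>1 z) has_fps_expansion fps_X * W1" by (intro fps_expansion_intros hW1)
  moreover have "eventually (\<lambda>z. \<omega> z = z * \<omega>1 z) (nhds 0)"
    using disk_ev by eventually_elim (use weq in auto)
  ultimately have WW: "W = fps_X * W1" using hW fps_eq_ev by blast
  define b where "b = \<omega>1 0"
  have W1_0: "fps_nth W1 0 = b" by (simp add: W1_def fps_expansion_def b_def)
  have W1_1: "fps_nth W1 1 = deriv \<omega>1 0" by (simp add: W1_def fps_expansion_def)
  have Wn: "fps_nth W 1 = b" "fps_nth W 2 = fps_nth W1 1" "fps_nth W 3 = fps_nth W1 2"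
    by (simp_all add: WW W1_0 numeral_3_eq_3 numeral_2_eq_2)
  have ble: "norm b \<le> 1" using bd1[of 0] by (simp add: b_def)
  have c1: "norm (fps_nth W1 1) \<le> 1 - norm b ^ 2"
    using coef1[OF hol1 bd1] by (simp add: W1_def fps_expansion_def b_def)
  show "norm (fps_nth W 1) \<le> 1" using ble Wn by simp
  show "norm (fps_nth W 2 + (fps_nth W 1)^2 / 2) \<le> 1"
  proof -
    have "norm (fps_nth W 2 + (fps_nth W 1)^2 / 2) \<le> norm (fps_nth W1 1) + norm b ^ 2 / 2"
      unfolding Wn using norm_triangle_ineq[of "fps_nth W1 1" "b^2/2"] by (simp add: norm_power norm_divide)
    also have "\<dots> \<le> 1" using c1 zero_le_power2[of "norm b"] by linarith
    finally show ?thesis .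
  qed
  show "norm (fps_nth W 3 + fps_nth W 1 * fps_nth W 2) \<le> 1"
  proof (cases "norm b = 1")
    case True
    have "norm (deriv \<omega> 0) = 1" using True dw b_def by simp
    then obtain \<alpha> where al: "\<And>z. norm z < 1 \<Longrightarrow> \<omega> z = \<alpha> * z"
      using Schwarz_Lemma(3)[OF hol w0, of 0] bd by auto
    have "(\<lambda>z. \<alpha> * z) has_fps_expansion fps_const \<alpha> * fps_X" by (intro fps_expansion_intros)
    moreover have "eventually (\<lambda>z. \<omega> z = \<alpha> * z) (nhds 0)"
      using disk_ev by eventually_elim (use al in auto)
    ultimately have "W = fps_const \<alpha> * fps_X" using hW fps_eq_ev by blast
    hence "fps_nth W 3 = 0" "fps_nth W 2 = 0" by (simp_all add: numeral_3_eq_3 numeral_2_eq_2)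
    thus ?thesis by simp
  next
    case False
    hence blt: "norm b < 1" using ble by simp
    define D where "D = (\<lambda>z. 1 - cnj b * \<omega>1 z)"
    have Dnz: "D z \<noteq> 0" if "z \<in> unit_disk" for z
    proof -
      have "norm (cnj b * \<omega>1 z) \<le> norm b * 1" unfolding norm_mult complex_mod_cnj using bd1[OF that] 
        by (intro mult_left_mono) auto
      thus ?thesis unfolding D_def using blt by auto
    qed
    define \<phi> where "\<phi> = (\<lambda>z. (\<omega>1 z - b) / D z)"
    have holphi: "\<phi> holomorphic_on unit_disk" unfolding \<phi>_def D_def
      by (intro holomorphic_intros hol1) (use Dnz D_def in auto)
    have phi0: "\<phi> 0 = 0" by (simp add: \<phi>_def b_def)
    have phib: "norm (\<phi> z) \<le> 1" if z: "z \<in> unit_disk" for z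
    proof -
      have "norm (\<omega>1 z - b) \<le> norm (D z)" unfolding D_def using bd1[OF z] ble by (rule mobius_le)
      thus ?thesis using Dnz[OF z] by (simp add: \<phi>_def norm_divide divide_le_eq_1)
    qed
    obtain \<psi> where holpsi: "\<psi> holomorphic_on unit_disk" and peq: "\<And>z. z \<in> unit_disk \<Longrightarrow> \<phi> z = z * \<psi> z"
      and bpsi: "\<And>z. z \<in> unit_disk \<Longrightarrow> norm (\<psi> z) \<le> 1"
      using schwarz_le[OF holphi phi0 phib] by metis
    define P where "P = fps_expansion \<psi> 0"
    have hP: "\<psi> has_fps_expansion P" unfolding P_def by (rule hol_fps[OF holpsi])
    define e0 where "e0 = \<psi> 0"
    define e1 where "e1 = deriv \<psi> 0"
    have P01: "fps_nth P 0 = e0" "fps_nth P 1 = e1" by (simp_all add: P_def fps_expansion_def e0_def e1_def)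
    have e0le: "norm e0 \<le> 1" using bpsi[of 0] by (simp add: e0_def)
    have e1le: "norm e1 \<le> 1 - norm e0 ^ 2" using coef1[OF holpsi bpsi] by (simp add: e0_def e1_def)
    have i1: "(\<lambda>z. \<omega>1 z * (1 + cnj b * (z * \<psi> z))) has_fps_expansion W1 * (1 + fps_const (cnj b) * (fps_X * P))"
      by (intro fps_expansion_intros hW1 hP)
    have i2: "(\<lambda>z. z * \<psi> z + b) has_fps_expansion fps_X * P + fps_const b"
      by (intro fps_expansion_intros hP)
    have ev: "eventually (\<lambda>z. \<omega>1 z * (1 + cnj b * (z * \<psi> z)) = z * \<psi> z + b) (nhds 0)"
      using disk_ev
    proof eventually_elim
      case (elim z)
      have "z * \<psi> z = (\<omega>1 z - b) / D z" using peq[OF elim] by (simp add: \<phi>_def)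
      hence "z * \<psi> z * D z = \<omega>1 z - b" using Dnz[OF elim] by (simp add: field_simps)
      thus ?case by (simp add: D_def algebra_simps)
    qed
    have E: "W1 * (1 + fps_const (cnj b) * (fps_X * P)) = fps_X * P + fps_const b"
      by (rule fps_eq_ev[OF i1 i2 ev])
    have E1: "fps_nth W1 1 + b * cnj b * e0 = e0"
      using arg_cong[OF E, of "\<lambda>F. fps_nth F 1"] W1_0 P01
      by (simp add: fps_mult_nth algebra_simps)
    have E2: "fps_nth W1 2 + fps_nth W1 1 * cnj b * e0 + b * cnj b * e1 = e1"
      using arg_cong[OF E, of "\<lambda>F. fps_nth F 2"] W1_0 P01
      by (simp add: fps_mult_nth numeral_2_eq_2 algebra_simps)
    define s where "s = 1 - norm b ^ 2"
    have bb: "b * cnj b = complex_of_real (norm b ^ 2)" using complex_norm_square[of b] by simp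
    have w11: "fps_nth W1 1 = complex_of_real s * e0"
    proof -
      have y: "fps_nth W1 1 = e0 - b * cnj b * e0" using E1 by (metis add_diff_cancel_right')
      show ?thesis unfolding y bb s_def by (simp add: algebra_simps)
    qed
    have w12: "fps_nth W1 2 = complex_of_real s * (e1 - cnj b * e0^2)"
    proof -
      have x: "fps_nth W1 2 = e1 - b * cnj b * e1 - fps_nth W1 1 * cnj b * e0"
        using E2 by (simp add: algebra_simps eq_diff_eq)
      show ?thesis unfolding x w11 bb s_def by (simp add: algebra_simps power2_eq_square)
    qed
    have "fps_nth W 3 + fps_nth W 1 * fps_nth W 2 = complex_of_real s * (e1 - cnj b * e0^2 + b * e0)"
      using Wn w11 w12 by (simp add: algebra_simps)
    moreover have s0: "0 \<le> s" using ble by (simp add: s_def power_le_one)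
    ultimately have "norm (fps_nth W 3 + fps_nth W 1 * fps_nth W 2) = s * norm (e1 - cnj b * e0^2 + b * e0)"
      by (simp only: norm_mult norm_of_real abs_of_nonneg)
    also have "\<dots> \<le> s * (norm e1 + norm b * norm e0 ^ 2 + norm b * norm e0)"
    proof (rule mult_left_mono)
      show "0 \<le> s" using ble by (simp add: s_def power_le_one)
      have "norm (e1 - cnj b * e0^2 + b * e0) \<le> norm e1 + norm (cnj b * e0^2) + norm (b * e0)"
        by (smt (verit) norm_triangle_ineq norm_triangle_ineq4)
      thus "norm (e1 - cnj b * e0^2 + b * e0) \<le> norm e1 + norm b * norm e0 ^ 2 + norm b * norm e0"
        by (simp add: norm_mult norm_power)
    qed
    also have "\<dots> \<le> s * (1 - norm e0 ^ 2 + norm b * norm e0 ^ 2 + norm b * norm e0)"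
      using e1le ble by (intro mult_left_mono) (auto simp: s_def power_le_one)
    also have "\<dots> \<le> 1" unfolding s_def by (rule real_ineq) (use ble e0le in auto)
    finally show ?thesis .
  qed
qed




lemma part1:
  assumes S: "Sstar_ch f" and n: "n \<in> {1,2,3::nat}"
  shows "norm (log_coeff f n) \<le> 1 / (2 * real n)"
proof -
  obtain p \<omega> where hf: "f holomorphic_on unit_disk" and f0: "f 0 = 0" and df0: "deriv f 0 = 1"
    and eq: "\<forall>z\<in>unit_disk - {0}. f z \<noteq> 0 \<and> p z = z * deriv f z / f z"
    and hw: "\<omega> holomorphic_on unit_disk" and w0: "\<omega> 0 = 0"
    and wb: "\<forall>z\<in>unit_disk. norm (\<omega> z) < 1" and pw: "\<forall>z\<in>unit_disk. p z = phi0 (\<omega> z)"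
    using S unfolding Sstar_ch_def classA_def subordinate_def by blast
  define W where "W = fps_expansion \<omega> 0"
  have hW: "\<omega> has_fps_expansion W" unfolding W_def by (rule hol_fps[OF hw])
  have W0: "fps_nth W 0 = 0" by (simp add: W_def fps_expansion_def w0)
  have "(phi0 \<circ> \<omega>) has_fps_expansion (Phi oo W)"
    by (rule has_fps_expansion_compose[OF phi0_fps hW W0])
  moreover have "eventually (\<lambda>z. (phi0 \<circ> \<omega>) z = p z) (nhds 0)"
    using disk_ev by eventually_elim (use pw in auto)
  ultimately have hP: "p has_fps_expansion (Phi oo W)"
    using has_fps_expansion_cong by blast
  note L = core[OF hf f0 df0 eq hP]
  note C = compose_nth[OF W0]
  note B = schwarz_coeffs[OF hw w0 _ hW] 
  have B1: "norm (fps_nth W 1) \<le> 1" and B2: "norm (fps_nth W 2 + (fps_nth W 1)^2 / 2) \<le> 1"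
    and B3: "norm (fps_nth W 3 + fps_nth W 1 * fps_nth W 2) \<le> 1" using B wb by auto
  from n consider "n = 1" | "n = 2" | "n = 3" by auto
  thus ?thesis
  proof cases
    case 1
    have X0: "log_coeff f 1 = fps_nth W 1 / 2" using L(1) C(1) by simp
    have X: "norm (log_coeff f 1) = norm (fps_nth W 1) / 2" unfolding X0 norm_divide by simp
    thus ?thesis using B1 \<open>n = 1\<close> by simp
  next
    case 2
    have X0: "log_coeff f 2 = (fps_nth W 2 + (fps_nth W 1)^2 / 2) / 4" using L(2) C(2) by simp
    have X: "norm (log_coeff f 2) = norm (fps_nth W 2 + (fps_nth W 1)^2 / 2) / 4" unfolding X0 norm_divide by simp
    thus ?thesis using B2 \<open>n = 2\<close> by simp
  next
    case 3
    have X0: "log_coeff f 3 = (fps_nth W 3 + fps_nth W 1 * fps_nth W 2) / 6" using L(3) C(3) by simp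
    have X: "norm (log_coeff f 3) = norm (fps_nth W 3 + fps_nth W 1 * fps_nth W 2) / 6" unfolding X0 norm_divide by simp
    thus ?thesis using B3 \<open>n = 3\<close> by simp
  qed
qed




lemma extremal_struct:
  assumes n: "n \<ge> 1"
  obtains E where "extremal n = E" "E holomorphic_on UNIV" "E 0 = 0" "deriv E 0 = 1"
    "\<And>z. z \<noteq> 0 \<Longrightarrow> E z \<noteq> 0 \<and> z * deriv E z / E z = phi0 (z^n)"
proof -
  define N where "N = (\<lambda>t::complex. t^n + cosh (t^n) - 1)"
  define G where "G = (\<lambda>w. if w = 0 then deriv N 0 else N w / w)"
  have holN: "N holomorphic_on UNIV" unfolding N_def
    by (rule analytic_imp_holomorphic) (intro analytic_intros)
  have N0: "N 0 = 0" using n by (simp add: N_def power_0_left)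
  have holG: "G holomorphic_on UNIV"
    by (rule pole_theorem_open_0[OF holN, of 0]) (auto simp: G_def N0)
  obtain H where dH0: "\<And>x. x \<in> UNIV \<Longrightarrow> (H has_field_derivative G x) (at x within UNIV)"
    using holomorphic_convex_primitive'[OF convex_UNIV open_UNIV holG] by blast
  have dH: "\<And>x. (H has_field_derivative G x) (at x)" using dH0 by simp
  have int: "contour_integral (linepath 0 z) (\<lambda>t. (t^n + cosh (t^n) - 1) / t) = H z - H 0" for z
  proof (cases "z = 0")
    case True thus ?thesis by simp
  next
    case False
    have "(G has_contour_integral (H z - H 0)) (linepath 0 z)"
      using contour_integral_primitive[OF dH0 valid_path_linepath[of 0 z]] by simp
    hence "((\<lambda>x. G (linepath 0 z x) * (z - 0)) has_integral (H z - H 0)) {0..1}"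
      by (simp add: has_contour_integral_linepath)
    moreover have "G (linepath 0 z x) * (z - 0) = (\<lambda>t. (t^n + cosh (t^n) - 1) / t) (linepath 0 z x) * (z - 0)"
      if "x \<in> {0..1} - {0}" for x
    proof -
      have "linepath 0 z x \<noteq> 0" using that False by (auto simp: linepath_def scaleR_conv_of_real)
      thus ?thesis by (simp add: G_def N_def)
    qed
    ultimately have "((\<lambda>x. (\<lambda>t. (t^n + cosh (t^n) - 1) / t) (linepath 0 z x) * (z - 0)) has_integral (H z - H 0)) {0..1}"
      using has_integral_spike_finite_eq[of "{0}"] by (smt (verit) finite.emptyI finite.insertI)
    hence "((\<lambda>t. (t^n + cosh (t^n) - 1) / t) has_contour_integral (H z - H 0)) (linepath 0 z)"
      by (simp add: has_contour_integral_linepath)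
    thus ?thesis by (rule contour_integral_unique)
  qed
  define E where "E = (\<lambda>z. z * exp (H z - H 0))"
  have ext: "extremal n = E" by (rule ext) (simp add: extremal_def E_def int)
  have dE: "(E has_field_derivative exp (H z - H 0) * (1 + z * G z)) (at z)" for z
    unfolding E_def by (rule derivative_eq_intros dH refl | simp add: algebra_simps)+
  have holE: "E holomorphic_on UNIV" using dE by (auto simp: holomorphic_on_open)
  have dE': "deriv E z = exp (H z - H 0) * (1 + z * G z)" for z by (rule DERIV_imp_deriv[OF dE])
  show ?thesis
  proof (rule that[OF ext holE])
    show "E 0 = 0" by (simp add: E_def)
    show "deriv E 0 = 1" by (simp add: dE')
    fix z :: complex assume z: "z \<noteq> 0"
    show "E z \<noteq> 0 \<and> z * deriv E z / E z = phi0 (z^n)"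
      unfolding dE' using z by (simp add: E_def G_def N_def phi0_def field_simps)
  qed
qed




lemma part2:
  assumes n: "n \<in> {1,2,3::nat}"
  shows "Sstar_ch (extremal n) \<and> norm (log_coeff (extremal n) n) = 1 / (2 * real n)"
proof -
  have n1: "n \<ge> 1" using n by auto
  obtain E where ext: "extremal n = E" and holE: "E holomorphic_on UNIV" and E0: "E 0 = 0"
    and dE0: "deriv E 0 = 1" and Ez: "\<And>z. z \<noteq> 0 \<Longrightarrow> E z \<noteq> 0 \<and> z * deriv E z / E z = phi0 (z^n)"
    using extremal_struct[OF n1] by blast
  define p where "p = (\<lambda>z::complex. phi0 (z^n))"
  have holp: "p holomorphic_on UNIV" unfolding p_def phi0_def
    by (rule analytic_imp_holomorphic) (intro analytic_intros)
  have holE': "E holomorphic_on unit_disk" using holE by (rule holomorphic_on_subset) auto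
  have holp': "p holomorphic_on unit_disk" using holp by (rule holomorphic_on_subset) auto
  have eq: "\<forall>z\<in>unit_disk - {0}. E z \<noteq> 0 \<and> p z = z * deriv E z / E z"
    using Ez by (auto simp: p_def)
  have sub: "subordinate p phi0"
    unfolding subordinate_def
  proof (intro exI[of _ "\<lambda>z. z^n"] conjI ballI)
    show "(\<lambda>z::complex. z^n) holomorphic_on unit_disk" by (intro holomorphic_intros)
    show "(0::complex)^n = 0" using n1 by (simp add: power_0_left)
    fix z :: complex assume z: "z \<in> unit_disk"
    show "norm (z^n) < 1" using z n1 by (simp add: norm_power power_less_one_iff)
    show "p z = phi0 (z^n)" by (simp add: p_def)
  qed
  have S: "Sstar_ch E" unfolding Sstar_ch_def classA_def
    using holE' E0 dE0 holp' eq sub by blast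
  have X0: "fps_nth (fps_X ^ n :: complex fps) 0 = 0" using n1 by simp
  have "(phi0 \<circ> (\<lambda>x. x^n)) has_fps_expansion (Phi oo fps_X ^ n)"
    by (rule has_fps_expansion_compose[OF phi0_fps has_fps_expansion_fps_X_power X0])
  hence hP: "p has_fps_expansion (Phi oo fps_X ^ n)" by (simp add: p_def o_def)
  note L = core[OF holE' E0 dE0 eq hP]
  note C = compose_nth[OF X0]
  from n consider "n = 1" | "n = 2" | "n = 3" by auto
  hence "norm (log_coeff E n) = 1 / (2 * real n)"
  proof cases
    case 1
    have A: "log_coeff E 1 = 1/2" using L(1) C(1) \<open>n = 1\<close> by simp
    show ?thesis unfolding \<open>n = 1\<close> A by simp
  next
    case 2
    have A: "log_coeff E 2 = 1/4" using L(2) C(2) \<open>n = 2\<close> by simp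
    show ?thesis unfolding \<open>n = 2\<close> A by simp
  next
    case 3
    have A: "log_coeff E 3 = 1/6" using L(3) C(3) \<open>n = 3\<close> by simp
    show ?thesis unfolding \<open>n = 3\<close> A by simp
  qed
  thus ?thesis using S ext by simp
qed

theorem theorem2p1:
  shows "(\<forall>f. Sstar_ch f \<longrightarrow>
            (\<forall>n\<in>{1,2,3::nat}. norm (log_coeff f n) \<le> 1 / (2 * real n)))
       \<and> (\<forall>n\<in>{1,2,3::nat}. Sstar_ch (extremal n) \<and>
            norm (log_coeff (extremal n) n) = 1 / (2 * real n))"
  using part1 part2 by blast



end
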